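(* Let $\widetilde{A}=(\widetilde a_{ij})$ be a real symmetric $N\times N$ matrix with nonnegative entries and zero diagonal ($\widetilde a_{jj}=0$ for all $j$), let $\widetilde d_j=\sum_{k=1}^N \widetilde a_{jk}$ and $\widetilde\Delta=\operatorname{diag}(\widetilde d_1,\dots,\widetilde d_N)$. Fix a node $q$ such that $\widetilde d_k\neq \widetilde d_q$ for every $k\neq q$. Then for $\zeta$ in a neighbourhood of $0$ the matrix $\widetilde\Delta+\zeta\widetilde A$ has an eigenvalue $\xi_q(\zeta)$ that is analytic in $\zeta$ with $\xi_q(0)=\widetilde d_q$, and its Taylor expansion is $$\xi_q(\zeta)=\widetilde d_q+c_2(q)\zeta^2+c_3(q)\zeta^3+c_4(q)\zeta^4+O(\zeta^5)$$ (i.e. the coefficient of $\zeta$ vanishes), where $$c_2(q)=\sum_{k\neq q}\frac{\widetilde a_{kq}^2}{\widetilde d_q-\widetilde d_k},\qquad c_3(q)=\sum_{r\neq q}\frac{\widetilde a_{rq}}{\widetilde d_q-\widetilde d_r}\sum_{k\neq q}\frac{\widetilde a_{kq}\widetilde a_{kr}}{\widetilde d_q-\widetilde d_k},$$ $$c_4(q)=\sum_{r\neq q}\frac{\widetilde a_{rq}}{\widetilde d_q-\widetilde d_r}\sum_{l\neq q}\frac{\widetilde a_{rl}}{\widetilde d_q-\widetilde d_l}\sum_{k\neq q}\frac{\widetilde a_{kq}\widetilde a_{kl}}{\widetilde d_q-\widetilde d_k}-\sum_{r\neq q}\frac{\widetilde a_{rq}^2}{(\widetilde d_q-\widetilde d_r)^2}\sum_{k\neq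 q}\frac{\widetilde a_{kq}^2}{\widetilde d_q-\widetilde d_k},$$ all sums running over indices in $\{1,\dots,N\}$. In particular, for a simple unweighted graph with zero-one adjacency matrix $A$ and degrees $d_j$, $c_2(q)=\sum_{k\in\mathcal N_q}\frac{1}{d_q-d_k}$ and $c_3(q)=\sum_{r\in\mathcal N_q}\sum_{k\in\mathcal N_q\cap\mathcal N_r}\frac{1}{(d_q-d_r)(d_q-d_k)}$, where $\mathcal N_j$ is the set of neighbours of node $j$.
   Context: $\widetilde A$ is the (weighted) adjacency matrix of an undirected graph without self-loops, $\widetilde d_j$ the strength (weighted degree) of node $j$; the Laplacian is $\widetilde\Delta-\widetilde A$ (the case $\zeta=-1$). The hypothesis says the degree of node $q$ is unique, so $\widetilde d_q$ is a simple eigenvalue of $\widetilde\Delta$. *)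

theory Defs
  imports "HOL-Analysis.Analysis"
begin

definition strength :: "real^'n^'n \<Rightarrow> 'n \<Rightarrow> real" where
  "strength A j = (\<Sum>k\<in>UNIV. A $ j $ k)"

definition degmat :: "real^'n^'n \<Rightarrow> real^'n^'n" where
  "degmat A = (\<chi> i j. if i = j then strength A i else 0)"

definition is_eigenvalue :: "real^'n^'n \<Rightarrow> real \<Rightarrow> bool" where
  "is_eigenvalue M \<xi> \<longleftrightarrow> (\<exists>v. v \<noteq> 0 \<and> M *v v = \<xi> *\<^sub>R v)"

end

theory Submission
  imports Defs
begin

fun Vc :: "real^'n^'n \<Rightarrow> 'n \<Rightarrow> nat \<Rightarrow> 'n \<Rightarrow> real" where
  "Vc A q 0 = (\<lambda>i. if i = q then 1 else 0)"
| "Vc A q (Suc n) = (\<lambda>i. if i = q then 0 else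
    ((\<Sum>m\<in>{1..n}. (\<Sum>j\<in>UNIV. A$q$j * Vc A q (m-1) j) * Vc A q (Suc n - m) i)
      - (\<Sum>j\<in>UNIV. A$i$j * Vc A q n j)) / (strength A i - strength A q))"

definition cc :: "real^'n^'n \<Rightarrow> 'n \<Rightarrow> nat \<Rightarrow> real" where
  "cc A q n = (if n = 0 then strength A q else (\<Sum>j\<in>UNIV. A$q$j * Vc A q (n-1) j))"

declare Vc.simps(2)[simp del]

lemma Vc_q: "Vc A q n q = (if n = 0 then 1 else 0)"
  by (cases n) (auto simp: Vc.simps)

lemma Vc_Suc: "i \<noteq> q \<Longrightarrow> Vc A q (Suc n) i =
    ((\<Sum>m\<in>{1..n}. cc A q m * Vc A q (Suc n - m) i)
      - (\<Sum>j\<in>UNIV. A$i$j * Vc A q n j)) / (strength A i - strength A q)"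
  by (simp add: Vc.simps cc_def)

lemma coeff_id:
  assumes simple: "\<And>k. k \<noteq> q \<Longrightarrow> strength A k \<noteq> strength A q"
  shows "strength A i * Vc A q n i + (if n = 0 then 0 else (\<Sum>j\<in>UNIV. A$i$j * Vc A q (n-1) j))
     = (\<Sum>m\<le>n. cc A q m * Vc A q (n - m) i)"
proof (cases "i = q")
  case True
  have "(\<Sum>m\<le>n. cc A q m * Vc A q (n - m) i) = (\<Sum>m\<le>n. if m = n then cc A q m else 0)"
    by (rule sum.cong) (auto simp: True Vc_q)
  also have "\<dots> = cc A q n" by simp
  finally show ?thesis using True by (auto simp: Vc_q cc_def)
next
  case False
  show ?thesis
  proof (cases n)
    case 0
    then show ?thesis using False by simp
  next
    case (Suc k)
    have split: "(\<Sum>m\<le>Suc k. cc A q m * Vc A q (Suc k - m) i)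
       = cc A q 0 * Vc A q (Suc k) i + (\<Sum>m\<in>{1..k}. cc A q m * Vc A q (Suc k - m) i)
         + cc A q (Suc k) * Vc A q 0 i"
    proof -
      have "{..Suc k} = insert 0 (insert (Suc k) {1..k})" by auto
      then show ?thesis by (simp add: add.commute add.left_commute)
    qed
    have ne: "strength A i - strength A q \<noteq> 0" using simple False by auto
    show ?thesis using ne unfolding Suc split
      by (simp add: Vc_Suc[OF False] False cc_def field_simps)
  qed
qed

lemma inv_sq_sum: "(\<Sum>j\<le>n. 1/(real j+1)^2) \<le> 2 - 1/(real n+1)"
proof (induction n)
  case 0 then show ?case by simp
next
  case (Suc n)
  have e: "1/(real n+1) - 1/(real n+2) = 1/((real n+1)*(real n+2))" by (simp add: field_simps)
  have "1/(real n+2)^2 \<le> 1/((real n+1)*(real n+2))"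
    by (rule divide_left_mono) (auto simp: power2_eq_square intro: mult_right_mono)
  then have "1/(real n+2)^2 \<le> 1/(real n+1) - 1/(real n+2)" using e by simp
  then show ?case using Suc by (simp add: add.commute)
qed

lemma pair_ineq:
  fixes x y :: real assumes "x > 0" "y > 0"
  shows "1/(x^2*y^2) \<le> 2*(1/x^2+1/y^2)/(x+y)^2"
proof -
  have "0 \<le> (x-y)^2" by simp
  then have "(x+y)^2 \<le> 2*(x^2+y^2)" by (simp add: power2_eq_square algebra_simps)
  then show ?thesis using assms by (simp add: field_simps)
qed

lemma conv_sum: "(\<Sum>j\<le>n. 1/((real j+1)^2*(real n - real j+1)^2)) \<le> 8/(real n+2)^2"
proof -
  have "(\<Sum>j\<le>n. 1/((real j+1)^2*(real n - real j+1)^2))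
      \<le> (\<Sum>j\<le>n. 2*(1/(real j+1)^2 + 1/(real n - real j+1)^2)/(real n+2)^2)"
  proof (rule sum_mono)
    fix j assume "j \<in> {..n}"
    then have "real n - real j + 1 > 0" by auto
    from pair_ineq[OF _ this, of "real j + 1"] show "1/((real j+1)^2*(real n - real j+1)^2)
      \<le> 2*(1/(real j+1)^2 + 1/(real n - real j+1)^2)/(real n+2)^2" by (simp add: algebra_simps)
  qed
  also have "\<dots> = (\<Sum>j\<le>n. 2/(real n+2)^2 * (1/(real j+1)^2 + 1/(real n - real j+1)^2))"
    by (rule sum.cong) simp_all
  also have "\<dots> = 2/(real n+2)^2 * ((\<Sum>j\<le>n. 1/(real j+1)^2) + (\<Sum>j\<le>n. 1/(real n - real j+1)^2))"
    by (simp only: sum.distrib[symmetric] sum_distrib_left)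
  also have "(\<Sum>j\<le>n. 1/(real n - real j+1)^2) = (\<Sum>j\<le>n. 1/(real j+1)^2)"
  proof -
    have "(\<Sum>j\<le>n. 1/(real j+1)^2) = (\<Sum>j\<le>n. 1/(real (n - j)+1)^2)"
      by (subst sum.atLeastAtMost_rev[of _ 0 n, simplified atLeast0AtMost]) (simp add: add.commute)
    also have "\<dots> = (\<Sum>j\<le>n. 1/(real n - real j+1)^2)"
      by (rule sum.cong) (auto simp: of_nat_diff)
    finally show ?thesis by simp
  qed
  also have "2/(real n+2)^2 * ((\<Sum>j\<le>n. 1/(real j+1)^2) + (\<Sum>j\<le>n. 1/(real j+1)^2)) \<le> 2/(real n+2)^2 * 4"
  proof -
    have "0 \<le> 1/(real n+1)" by simp
    then have "(\<Sum>j\<le>n. 1/(real j+1)^2) \<le> 2" using inv_sq_sum[of n] by linarith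
    then show ?thesis by (intro mult_left_mono) auto
  qed
  finally show ?thesis by simp
qed

lemma row_bound:
  assumes nonneg: "\<And>i j. A$i$j \<ge> 0" and xb: "\<And>j. \<bar>x j\<bar> \<le> b"
  shows "\<bar>\<Sum>j\<in>UNIV. A$i$j * x j\<bar> \<le> strength A i * b"
proof -
  have "\<bar>\<Sum>j\<in>UNIV. A$i$j * x j\<bar> \<le> (\<Sum>j\<in>UNIV. \<bar>A$i$j * x j\<bar>)" by (rule sum_abs)
  also have "\<dots> \<le> (\<Sum>j\<in>UNIV. A$i$j * b)"
    by (rule sum_mono) (simp add: abs_mult nonneg xb mult_left_mono)
  also have "\<dots> = strength A i * b" by (simp add: strength_def sum_distrib_right)
  finally show ?thesis .
qed

lemma conv_sum2: "(\<Sum>m\<in>{1..k}. 1/(real m^2*(real k+2-real m)^2)) \<le> 8/(real k+2)^2"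
proof -
  have "(\<Sum>m\<in>{1..k}. 1/(real m^2*(real k+2-real m)^2)) \<le> (\<Sum>m\<in>{1..Suc k}. 1/(real m^2*(real k+2-real m)^2))"
    by (rule sum_mono2) auto
  also have "\<dots> = (\<Sum>j\<in>{0..k}. 1/(real (Suc j)^2*(real k+2-real (Suc j))^2))"
    by (subst sum.shift_bounds_cl_Suc_ivl[symmetric]) simp
  also have "\<dots> = (\<Sum>j\<le>k. 1/((real j+1)^2*(real k - real j+1)^2))"
    by (rule sum.cong) (auto simp: algebra_simps)
  also have "\<dots> \<le> 8/(real k+2)^2" by (rule conv_sum)
  finally show ?thesis .
qed

lemma Vc_bound:
  assumes nonneg: "\<And>i j. A$i$j \<ge> 0"
    and Sb: "\<And>i. strength A i \<le> S"
    and dpos: "\<delta> > 0" and dle: "\<And>i. i \<noteq> q \<Longrightarrow> \<delta> \<le> \<bar>strength A i - strength A q\<bar>"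
    and K: "12*S/\<delta> \<le> K"
  shows "\<bar>Vc A q n i\<bar> \<le> K^n/(real n+1)^2"
proof (induction n arbitrary: i rule: less_induct)
  case (less n)
  have S0: "S \<ge> 0" using Sb[of q] nonneg by (smt (verit) strength_def sum_nonneg)
  have K0: "K \<ge> 0" using K S0 dpos by (smt (verit) divide_nonneg_pos)
  show ?case
  proof (cases n)
    case 0 then show ?thesis by simp
  next
    case (Suc k)
    show ?thesis
    proof (cases "i = q")
      case True then show ?thesis using Suc K0 by (simp add: Vc_q)
    next
      case False
      have ccb: "\<bar>cc A q m\<bar> \<le> S * K^(m-1)/(real m)^2" if "m \<in> {1..k}" for m
      proof -
        have "m - 1 < n" using that Suc by auto
        then have "\<And>j. \<bar>Vc A q (m-1) j\<bar> \<le> K^(m-1)/(real (m-1)+1)^2" by (rule less.IH)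
        then have "\<bar>\<Sum>j\<in>UNIV. A$q$j * Vc A q (m-1) j\<bar> \<le> strength A q * (K^(m-1)/(real (m-1)+1)^2)"
          by (rule row_bound[OF nonneg])
        then have "\<bar>cc A q m\<bar> \<le> strength A q * (K^(m-1)/(real (m-1)+1)^2)"
          using that by (simp add: cc_def)
        also have "\<dots> \<le> S * (K^(m-1)/(real (m-1)+1)^2)"
          by (rule mult_right_mono) (auto simp: Sb K0)
        finally show ?thesis using that by (simp add: of_nat_diff)
      qed
      have Vb: "\<bar>Vc A q (Suc k - m) i\<bar> \<le> K^(Suc k - m)/(real k + 2 - real m)^2" if "m \<in> {1..k}" for m
      proof -
        have "Suc k - m < n" using that Suc by auto
        then have "\<bar>Vc A q (Suc k - m) i\<bar> \<le> K^(Suc k - m)/(real (Suc k - m)+1)^2" by (rule less.IH)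
        then show ?thesis using that by (simp add: of_nat_diff algebra_simps)
      qed
      define T1 where "T1 = (\<Sum>m\<in>{1..k}. cc A q m * Vc A q (Suc k - m) i)"
      define T2 where "T2 = (\<Sum>j\<in>UNIV. A$i$j * Vc A q k j)"
      have "\<bar>T1\<bar> \<le> (\<Sum>m\<in>{1..k}. \<bar>cc A q m * Vc A q (Suc k - m) i\<bar>)"
        unfolding T1_def by (rule sum_abs)
      also have "\<dots> \<le> (\<Sum>m\<in>{1..k}. (S * K^(m-1)/(real m)^2) * (K^(Suc k - m)/(real k + 2 - real m)^2))"
        unfolding abs_mult by (rule sum_mono) (intro mult_mono ccb Vb; simp add: S0 K0)
      also have "\<dots> = (\<Sum>m\<in>{1..k}. (S * K^k) * (1/(real m^2*(real k+2-real m)^2)))"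
      proof (rule sum.cong)
        fix m assume m: "m \<in> {1..k}"
        then have "K^(m-1) * K^(Suc k - m) = K^k" by (simp add: power_add[symmetric])
        then show "(S * K^(m-1)/(real m)^2) * (K^(Suc k - m)/(real k + 2 - real m)^2)
          = (S * K^k) * (1/(real m^2*(real k+2-real m)^2))"
          by (simp add: field_simps)
      qed simp
      also have "\<dots> = (S * K^k) * (\<Sum>m\<in>{1..k}. 1/(real m^2*(real k+2-real m)^2))"
        by (simp add: sum_distrib_left)
      also have "\<dots> \<le> (S * K^k) * (8/(real k+2)^2)"
        by (rule mult_left_mono[OF conv_sum2]) (simp add: S0 K0)
      finally have T1b: "\<bar>T1\<bar> \<le> (S * K^k) * (8/(real k+2)^2)" .
      have "k < n" using Suc by simp
      then have "\<And>j. \<bar>Vc A q k j\<bar> \<le> K^k/(real k+1)^2" by (rule less.IH)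
      then have "\<bar>T2\<bar> \<le> strength A i * (K^k/(real k+1)^2)"
        unfolding T2_def by (rule row_bound[OF nonneg])
      also have "\<dots> \<le> S * (K^k/(real k+1)^2)"
        by (rule mult_right_mono) (auto simp: Sb K0)
      also have "\<dots> \<le> S * (K^k * (4/(real k+2)^2))"
      proof -
        have "(real k+2)^2 \<le> 4*(real k+1)^2" by (simp add: power2_eq_square algebra_simps)
        then have "1/(real k+1)^2 \<le> 4/(real k+2)^2"
          by (simp add: divide_simps)
        then have "K^k * (1/(real k+1)^2) \<le> K^k * (4/(real k+2)^2)"
          by (rule mult_left_mono) (simp add: K0)
        then show ?thesis by (intro mult_left_mono) (simp_all add: S0)
      qed
      finally have T2b: "\<bar>T2\<bar> \<le> S * (K^k * (4/(real k+2)^2))" .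
      have V: "Vc A q n i = (T1 - T2) / (strength A i - strength A q)"
        unfolding Suc T1_def T2_def by (rule Vc_Suc[OF False])
      have "\<bar>Vc A q n i\<bar> = \<bar>T1 - T2\<bar> / \<bar>strength A i - strength A q\<bar>"
        unfolding V by (simp add: abs_divide)
      also have "\<dots> \<le> (\<bar>T1\<bar> + \<bar>T2\<bar>) / \<delta>"
        by (rule frac_le) (auto simp: dpos dle False)
      also have "\<dots> \<le> (12 * S * K^k/(real k+2)^2) / \<delta>"
        by (rule divide_right_mono) (use T1b T2b dpos in auto)
      also have "\<dots> = (12*S/\<delta>) * (K^k/(real k+2)^2)" by simp
      also have "\<dots> \<le> K * (K^k/(real k+2)^2)"
        by (rule mult_right_mono[OF K]) (simp add: K0)
      also have "\<dots> = K^n/(real n+1)^2" by (simp add: Suc algebra_simps)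
      finally show ?thesis .
    qed
  qed
qed

lemma sum_noq: "f q = 0 \<Longrightarrow> (\<Sum>j\<in>UNIV. f j) = (\<Sum>j\<in>{j. j \<noteq> q}. f (j::'n::finite))"
proof -
  assume "f q = 0"
  have "UNIV = insert q {j. j \<noteq> q}" by auto
  then have "(\<Sum>j\<in>UNIV. f j) = (\<Sum>j\<in>insert q {j. j \<noteq> q}. f j)" by simp
  also have "\<dots> = (\<Sum>j\<in>{j. j \<noteq> q}. f j)" using \<open>f q = 0\<close> by (subst sum.insert) auto
  finally show ?thesis .
qed

lemma sumV: "n \<ge> 1 \<Longrightarrow> (\<Sum>j\<in>UNIV. f j * Vc A q n j) = (\<Sum>j\<in>{j. j \<noteq> q}. f j * Vc A q n j)"
  by (rule sum_noq) (simp add: Vc_q)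

lemma flipdiv: "(u - v)/(a - b) = (v - u)/(b - (a::real))"
  by (metis minus_diff_eq minus_divide_divide)

lemma alg4: "a * ((X - c*(a/z))/z) = a/z * X - (a::real)^2/z^2 * c"
  by (cases "z=0") (simp_all add: field_simps power2_eq_square)

lemma sumV0[simp]: "(\<Sum>j\<in>UNIV. f j * Vc A q 0 j) = f q"
proof -
  have "(\<Sum>j\<in>UNIV. f j * Vc A q 0 j) = (\<Sum>j\<in>UNIV. if j = q then f j else 0)"
    by (rule sum.cong) auto
  then show ?thesis by simp
qed

lemma coeffs:
  fixes A :: "real^'n^'n" and q :: 'n
  assumes sym: "\<And>i j. A $ i $ j = A $ j $ i"
    and diag0: "\<And>j. A $ j $ j = 0"
    and simple: "\<And>k. k \<noteq> q \<Longrightarrow> strength A k \<noteq> strength A q"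
  defines "d \<equiv> strength A"
  shows "cc A q 1 = 0"
   and "cc A q 2 = (\<Sum>k\<in>{k. k \<noteq> q}. (A $ k $ q)^2 / (d q - d k))"
   and "cc A q 3 = (\<Sum>r\<in>{r. r \<noteq> q}. A $ r $ q / (d q - d r) *
              (\<Sum>k\<in>{k. k \<noteq> q}. A $ k $ q * A $ k $ r / (d q - d k)))"
   and "cc A q 4 = (\<Sum>r\<in>{r. r \<noteq> q}. A $ r $ q / (d q - d r) *
              (\<Sum>l\<in>{l. l \<noteq> q}. A $ r $ l / (d q - d l) *
                 (\<Sum>k\<in>{k. k \<noteq> q}. A $ k $ q * A $ k $ l / (d q - d k))))
           - (\<Sum>r\<in>{r. r \<noteq> q}. (A $ r $ q)^2 / (d q - d r)^2) *
             (\<Sum>k\<in>{k. k \<noteq> q}. (A $ k $ q)^2 / (d q - d k))"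
proof -
  have ne: "d i - d q \<noteq> 0" "d q - d i \<noteq> 0" if "i \<noteq> q" for i
    using simple[OF that] unfolding d_def by auto
  show c1: "cc A q 1 = 0" using sumV0[of "\<lambda>j. A$q$j" A q] by (simp add: cc_def diag0 del: sumV0)
  have V1: "Vc A q 1 i = A$i$q/(d q - d i)" if "i \<noteq> q" for i
  proof -
    have "Vc A q (Suc 0) i = (0 - A$i$q)/(d i - d q)"
      using Vc_Suc[OF that, of A 0] sumV0[of "\<lambda>j. A$i$j" A q] by (simp add: d_def del: sumV0)
    also have "\<dots> = A$i$q/(d q - d i)" using ne[OF that] by (simp add: field_simps)
    finally show ?thesis by simp
  qed
  note V1s = V1[unfolded One_nat_def]
  note c1s = c1[unfolded One_nat_def]
  have c2: "cc A q 2 = (\<Sum>k\<in>{k. k \<noteq> q}. (A $ k $ q)^2 / (d q - d k))"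
  proof -
    have "cc A q 2 = (\<Sum>j\<in>{j. j \<noteq> q}. A$q$j * Vc A q 1 j)"
      by (simp add: cc_def sumV)
    also have "\<dots> = (\<Sum>k\<in>{k. k \<noteq> q}. (A $ k $ q)^2 / (d q - d k))"
      by (rule sum.cong) (auto simp: V1 V1s sym[of q] power2_eq_square)
    finally show ?thesis .
  qed
  then show "cc A q 2 = (\<Sum>k\<in>{k. k \<noteq> q}. (A $ k $ q)^2 / (d q - d k))" .
  have V2: "Vc A q 2 i = (\<Sum>k\<in>{k. k \<noteq> q}. A$i$k * A$k$q/(d q - d k))/(d q - d i)" if "i \<noteq> q" for i
  proof -
    have "Vc A q (Suc 1) i = (cc A q 1 * Vc A q 1 i - (\<Sum>j\<in>UNIV. A$i$j * Vc A q 1 j))/(d i - d q)"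
      using Vc_Suc[OF that, of A 1] by (simp add: d_def)
    also have "\<dots> = (- (\<Sum>k\<in>{k. k \<noteq> q}. A$i$k * A$k$q/(d q - d k)))/(d i - d q)"
      by (simp add: c1 c1s sumV V1 V1s)
    also have "\<dots> = (\<Sum>k\<in>{k. k \<noteq> q}. A$i$k * A$k$q/(d q - d k))/(d q - d i)"
      using ne[OF that] by (simp add: field_simps)
    finally show ?thesis by (simp add: numeral_2_eq_2)
  qed
  show "cc A q 3 = (\<Sum>r\<in>{r. r \<noteq> q}. A $ r $ q / (d q - d r) *
              (\<Sum>k\<in>{k. k \<noteq> q}. A $ k $ q * A $ k $ r / (d q - d k)))"
  proof -
    have "cc A q 3 = (\<Sum>j\<in>{j. j \<noteq> q}. A$q$j * Vc A q 2 j)"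
      by (simp add: cc_def sumV)
    also have "\<dots> = (\<Sum>r\<in>{r. r \<noteq> q}. A $ r $ q / (d q - d r) *
              (\<Sum>k\<in>{k. k \<noteq> q}. A $ k $ q * A $ k $ r / (d q - d k)))"
    proof (rule sum.cong)
      fix r assume r: "r \<in> {r. r \<noteq> q}"
      have "(\<Sum>k\<in>{k. k \<noteq> q}. A$r$k * A$k$q/(d q - d k)) = (\<Sum>k\<in>{k. k \<noteq> q}. A $ k $ q * A $ k $ r / (d q - d k))"
        by (rule sum.cong) (auto simp: sym[of r])
      then show "A$q$r * Vc A q 2 r = A $ r $ q / (d q - d r) *
              (\<Sum>k\<in>{k. k \<noteq> q}. A $ k $ q * A $ k $ r / (d q - d k))"
        using r by (simp add: V2 sym[of q r])
    qed simp
    finally show ?thesis .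
  qed
  have V3: "Vc A q 3 i = ((\<Sum>l\<in>{l. l \<noteq> q}. A$i$l * Vc A q 2 l) - cc A q 2 * (A$i$q/(d q - d i)))/(d q - d i)"
    if "i \<noteq> q" for i
  proof -
    have e: "{1..2::nat} = {1,2}" by auto
    have s: "(\<Sum>m\<in>{1..2}. cc A q m * Vc A q (Suc 2 - m) i) = cc A q 1 * Vc A q 2 i + cc A q 2 * Vc A q 1 i"
      unfolding e by (simp add: numeral_2_eq_2)
    have "Vc A q (Suc 2) i = ((cc A q 1 * Vc A q 2 i + cc A q 2 * Vc A q 1 i) - (\<Sum>j\<in>UNIV. A$i$j * Vc A q 2 j))/(d i - d q)"
      unfolding Vc_Suc[OF that, of A 2] s d_def ..
    also have "\<dots> = (cc A q 2 * (A$i$q/(d q - d i)) - (\<Sum>l\<in>{l. l \<noteq> q}. A$i$l * Vc A q 2 l))/(d i - d q)"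
      by (simp add: c1 c1s sumV V1 V1s that)
    also have "\<dots> = ((\<Sum>l\<in>{l. l \<noteq> q}. A$i$l * Vc A q 2 l) - cc A q 2 * (A$i$q/(d q - d i)))/(d q - d i)"
      by (rule flipdiv)
    finally show ?thesis by (simp add: numeral_3_eq_3)
  qed
  show "cc A q 4 = (\<Sum>r\<in>{r. r \<noteq> q}. A $ r $ q / (d q - d r) *
              (\<Sum>l\<in>{l. l \<noteq> q}. A $ r $ l / (d q - d l) *
                 (\<Sum>k\<in>{k. k \<noteq> q}. A $ k $ q * A $ k $ l / (d q - d k))))
           - (\<Sum>r\<in>{r. r \<noteq> q}. (A $ r $ q)^2 / (d q - d r)^2) *
             (\<Sum>k\<in>{k. k \<noteq> q}. (A $ k $ q)^2 / (d q - d k))"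
  proof -
    have "cc A q 4 = (\<Sum>j\<in>{j. j \<noteq> q}. A$q$j * Vc A q 3 j)"
      by (simp add: cc_def sumV)
    also have "\<dots> = (\<Sum>r\<in>{r. r \<noteq> q}. A $ r $ q / (d q - d r) *
              (\<Sum>l\<in>{l. l \<noteq> q}. A $ r $ l / (d q - d l) *
                 (\<Sum>k\<in>{k. k \<noteq> q}. A $ k $ q * A $ k $ l / (d q - d k)))
           - (A $ r $ q)^2 / (d q - d r)^2 * cc A q 2)"
    proof (rule sum.cong)
      fix r assume r: "r \<in> {r. r \<noteq> q}"
      have X: "(\<Sum>l\<in>{l. l \<noteq> q}. A$r$l * Vc A q 2 l) = (\<Sum>l\<in>{l. l \<noteq> q}. A $ r $ l / (d q - d l) *
                 (\<Sum>k\<in>{k. k \<noteq> q}. A $ k $ q * A $ k $ l / (d q - d k)))"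
      proof (rule sum.cong)
        fix l assume l: "l \<in> {l. l \<noteq> q}"
        have "(\<Sum>k\<in>{k. k \<noteq> q}. A$l$k * A$k$q/(d q - d k)) = (\<Sum>k\<in>{k. k \<noteq> q}. A $ k $ q * A $ k $ l / (d q - d k))"
          by (rule sum.cong) (auto simp: sym[of l])
        then show "A$r$l * Vc A q 2 l = A $ r $ l / (d q - d l) *
                 (\<Sum>k\<in>{k. k \<noteq> q}. A $ k $ q * A $ k $ l / (d q - d k))"
          using l by (simp add: V2)
      qed simp
      have nr: "d q - d r \<noteq> 0" using ne r by auto
      show "A$q$r * Vc A q 3 r = A $ r $ q / (d q - d r) *
              (\<Sum>l\<in>{l. l \<noteq> q}. A $ r $ l / (d q - d l) *
                 (\<Sum>k\<in>{k. k \<noteq> q}. A $ k $ q * A $ k $ l / (d q - d k)))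
           - (A $ r $ q)^2 / (d q - d r)^2 * cc A q 2" (is "_ = ?R")
      proof -
        have rq: "r \<noteq> q" using r by simp
        have "A$q$r * Vc A q 3 r = A$r$q * (((\<Sum>l\<in>{l. l \<noteq> q}. A$r$l * Vc A q 2 l) - cc A q 2 * (A$r$q/(d q - d r)))/(d q - d r))"
          by (simp add: V3[OF rq] sym[of q r])
        then show ?thesis by (simp only: X alg4)
      qed
    qed simp
    also have "\<dots> = (\<Sum>r\<in>{r. r \<noteq> q}. A $ r $ q / (d q - d r) *
              (\<Sum>l\<in>{l. l \<noteq> q}. A $ r $ l / (d q - d l) *
                 (\<Sum>k\<in>{k. k \<noteq> q}. A $ k $ q * A $ k $ l / (d q - d k))))
           - (\<Sum>r\<in>{r. r \<noteq> q}. (A $ r $ q)^2 / (d q - d r)^2) * cc A q 2"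
      by (simp add: sum_subtractf sum_distrib_right)
    finally show ?thesis by (simp only: c2)
  qed
qed

lemma filter_sum:
  fixes g f :: "'a \<Rightarrow> real"
  assumes "finite U" "\<And>k. k \<in> U \<Longrightarrow> g k = (if P k then f k else 0)" "{k\<in>U. P k} = T"
  shows "sum g U = sum f T"
proof -
  have "sum g U = (\<Sum>k\<in>U. if P k then f k else 0)" using assms(2) by (rule sum.cong[OF refl])
  also have "\<dots> = sum f {k\<in>U. P k}" by (simp add: sum.inter_filter[OF assms(1)])
  finally show ?thesis using assms(3) by simp
qed

theorem mainTheorem1:
  fixes A :: "real^'n^'n" and q :: 'n
  assumes sym: "\<And>i j. A $ i $ j = A $ j $ i"
    and nonneg: "\<And>i j. A $ i $ j \<ge> 0"
    and diag0: "\<And>j. A $ j $ j = 0"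
    and simple: "\<And>k. k \<noteq> q \<Longrightarrow> strength A k \<noteq> strength A q"
  defines "d \<equiv> strength A"
  shows "\<exists>\<epsilon>>0. \<exists>\<xi>::real \<Rightarrow> real. \<exists>c::nat \<Rightarrow> real.
     (\<forall>\<zeta>. \<bar>\<zeta>\<bar> < \<epsilon> \<longrightarrow> (\<lambda>n. c n * \<zeta> ^ n) sums \<xi> \<zeta>) \<and>
     (\<forall>\<zeta>. \<bar>\<zeta>\<bar> < \<epsilon> \<longrightarrow> is_eigenvalue (degmat A + \<zeta> *\<^sub>R A) (\<xi> \<zeta>)) \<and>
     \<xi> 0 = d q \<and>
     c 0 = d q \<and> c 1 = 0 \<and>
     c 2 = (\<Sum>k\<in>{k. k \<noteq> q}. (A $ k $ q)^2 / (d q - d k)) \<and>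
     c 3 = (\<Sum>r\<in>{r. r \<noteq> q}. A $ r $ q / (d q - d r) *
              (\<Sum>k\<in>{k. k \<noteq> q}. A $ k $ q * A $ k $ r / (d q - d k))) \<and>
     c 4 = (\<Sum>r\<in>{r. r \<noteq> q}. A $ r $ q / (d q - d r) *
              (\<Sum>l\<in>{l. l \<noteq> q}. A $ r $ l / (d q - d l) *
                 (\<Sum>k\<in>{k. k \<noteq> q}. A $ k $ q * A $ k $ l / (d q - d k))))
           - (\<Sum>r\<in>{r. r \<noteq> q}. (A $ r $ q)^2 / (d q - d r)^2) *
             (\<Sum>k\<in>{k. k \<noteq> q}. (A $ k $ q)^2 / (d q - d k)) \<and>
     ((\<forall>i j. A $ i $ j = 0 \<or> A $ i $ j = 1) \<longrightarrow>
        c 2 = (\<Sum>k\<in>{k. A $ q $ k = 1}. 1 / (d q - d k)) \<and>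
        c 3 = (\<Sum>r\<in>{r. A $ q $ r = 1}. \<Sum>k\<in>{k. A $ q $ k = 1 \<and> A $ r $ k = 1}.
                 1 / ((d q - d r) * (d q - d k))))"
proof -
  have dd: "d = strength A" by (simp add: d_def)
  define S where "S = (\<Sum>i\<in>UNIV. strength A i)"
  have sn: "strength A i \<ge> 0" for i unfolding strength_def by (rule sum_nonneg) (simp add: nonneg)
  have Sb: "strength A i \<le> S" for i unfolding S_def by (rule member_le_sum) (auto simp: sn)
  have S0: "S \<ge> 0" using Sb[of q] sn[of q] by simp
  define \<delta> where "\<delta> = Min (insert 1 ((\<lambda>i. \<bar>strength A i - strength A q\<bar>) ` {i. i \<noteq> q}))"
  have dpos: "\<delta> > 0" unfolding \<delta>_def using simple by (subst Min_gr_iff) auto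
  have dle: "\<delta> \<le> \<bar>strength A i - strength A q\<bar>" if "i \<noteq> q" for i
    unfolding \<delta>_def using that by (intro Min_le) auto
  define K where "K = 12*S/\<delta> + 1"
  have K: "12*S/\<delta> \<le> K" by (simp add: K_def)
  have K1: "K \<ge> 1" using S0 dpos by (simp add: K_def)
  have Vb: "\<bar>Vc A q n i\<bar> \<le> K^n" for n i
  proof -
    have "\<bar>Vc A q n i\<bar> \<le> K^n/(real n+1)^2" by (rule Vc_bound[OF nonneg Sb dpos dle K])
    also have "\<dots> \<le> K^n/1" using K1 one_le_power[of "real n + 1" 2] by (intro divide_left_mono) auto
    finally show ?thesis by simp
  qed
  define C where "C = \<bar>strength A q\<bar> + S"
  have cb: "\<bar>cc A q n\<bar> \<le> C * K^n" for n
  proof (cases n)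
    case 0 then show ?thesis using S0 by (simp add: cc_def C_def)
  next
    case (Suc m)
    have "\<bar>cc A q n\<bar> \<le> strength A q * K^m" unfolding Suc cc_def
      by (simp, rule row_bound[OF nonneg Vb])
    also have "\<dots> \<le> C * K^m" using K1 sn[of q] S0
      by (intro mult_right_mono) (auto simp: C_def)
    also have "\<dots> \<le> C * K^n" unfolding Suc using K1 S0
      by (intro mult_left_mono power_increasing) (auto simp: C_def)
    finally show ?thesis .
  qed
  define \<epsilon> where "\<epsilon> = 1/K"
  have epos: "\<epsilon> > 0" using K1 by (simp add: \<epsilon>_def)
  define \<xi> where "\<xi> = (\<lambda>z. \<Sum>n. cc A q n * z^n)"
  define vv where "vv = (\<lambda>z. \<chi> i. \<Sum>n. Vc A q n i * z^n)"
  have geo: "summable (\<lambda>n. (K * \<bar>z\<bar>)^n)" if "\<bar>z\<bar> < \<epsilon>" for z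
  proof (rule summable_geometric)
    have "K * \<bar>z\<bar> < K * \<epsilon>" using that K1 by simp
    then show "norm (K * \<bar>z\<bar>) < 1" using K1 by (simp add: \<epsilon>_def)
  qed
  have sc: "summable (\<lambda>n. norm (cc A q n * z^n))" if "\<bar>z\<bar> < \<epsilon>" for z
  proof (rule summable_comparison_test[OF _ summable_mult[OF geo[OF that], of C]])
    show "\<exists>N. \<forall>n\<ge>N. norm (norm (cc A q n * z ^ n)) \<le> C * (K * \<bar>z\<bar>) ^ n"
    proof -
      have "\<bar>cc A q n\<bar> * \<bar>z\<bar>^n \<le> (C*K^n) * \<bar>z\<bar>^n" for n by (rule mult_right_mono[OF cb]) simp
      then show ?thesis by (auto simp: abs_mult power_abs power_mult_distrib mult.assoc)
    qed
  qed
  have sv: "summable (\<lambda>n. norm (Vc A q n i * z^n))" if "\<bar>z\<bar> < \<epsilon>" for z i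
  proof (rule summable_comparison_test[OF _ geo[OF that]])
    show "\<exists>N. \<forall>n\<ge>N. norm (norm (Vc A q n i * z ^ n)) \<le> (K * \<bar>z\<bar>) ^ n"
    proof -
      have "\<bar>Vc A q n i\<bar> * \<bar>z\<bar>^n \<le> (K^n) * \<bar>z\<bar>^n" for n by (rule mult_right_mono[OF Vb]) simp
      then show ?thesis by (auto simp: abs_mult power_abs power_mult_distrib)
    qed
  qed
  have sums_c: "(\<lambda>n. cc A q n * z ^ n) sums \<xi> z" if "\<bar>z\<bar> < \<epsilon>" for z
    unfolding \<xi>_def by (rule summable_sums[OF summable_norm_cancel[OF sc[OF that]]])
  have sums_v: "(\<lambda>n. Vc A q n i * z ^ n) sums (vv z $ i)" if "\<bar>z\<bar> < \<epsilon>" for z i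
    unfolding vv_def by (simp, rule summable_sums[OF summable_norm_cancel[OF sv[OF that]]])
  have eig: "is_eigenvalue (degmat A + z *\<^sub>R A) (\<xi> z)" if z: "\<bar>z\<bar> < \<epsilon>" for z
  proof -
    have "vv z $ q = 1"
    proof -
      have "(\<lambda>n. Vc A q n q * z ^ n) = (\<lambda>n. if n = 0 then 1 else 0)"
        by (auto simp: Vc_q)
      moreover have "(\<lambda>n::nat. if n = 0 then 1 else 0) sums (1::real)"
        using sums_single[of 0 "\<lambda>_. 1::real"] by simp
      ultimately show ?thesis using sums_unique2 sums_v[OF z, of q] by metis
    qed
    then have nz: "vv z \<noteq> 0" by auto
    have "(degmat A + z *\<^sub>R A) *v vv z = \<xi> z *\<^sub>R vv z"
    proof (rule vec_eq_iff[THEN iffD2], rule allI)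
      fix i
      let ?v = "vv z"
      have L: "((degmat A + z *\<^sub>R A) *v ?v) $ i = strength A i * ?v$i + z * (\<Sum>j\<in>UNIV. A$i$j * ?v$j)"
      proof -
        have "((degmat A + z *\<^sub>R A) *v ?v) $ i = (\<Sum>j\<in>UNIV. (if i = j then strength A i * ?v$j else 0) + z * (A$i$j * ?v$j))"
          by (simp add: matrix_vector_mult_def degmat_def distrib_right mult.assoc; rule sum.cong; simp)
        also have "\<dots> = strength A i * ?v$i + z * (\<Sum>j\<in>UNIV. A$i$j * ?v$j)"
          by (simp add: sum.distrib sum_distrib_left)
        finally show ?thesis .
      qed
      define f where "f = (\<lambda>n. if n = 0 then 0 else (\<Sum>j\<in>UNIV. A$i$j * Vc A q (n-1) j) * z^n)"
      have s1: "(\<lambda>n. strength A i * (Vc A q n i * z^n)) sums (strength A i * ?v$i)"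
        by (rule sums_mult[OF sums_v[OF z]])
      have s2: "(\<lambda>n. \<Sum>j\<in>UNIV. A$i$j * (Vc A q n j * z^n)) sums (\<Sum>j\<in>UNIV. A$i$j * ?v$j)"
        by (rule sums_sum, rule sums_mult[OF sums_v[OF z]])
      have "(\<lambda>n. f (Suc n)) sums (z * (\<Sum>j\<in>UNIV. A$i$j * ?v$j))"
      proof -
        have "(\<lambda>n. f (Suc n)) = (\<lambda>n. z * (\<Sum>j\<in>UNIV. A$i$j * (Vc A q n j * z^n)))"
          by (auto simp: f_def sum_distrib_left sum_distrib_right mult_ac)
        then show ?thesis using sums_mult[OF s2, of z] by simp
      qed
      then have s3: "f sums (z * (\<Sum>j\<in>UNIV. A$i$j * ?v$j))"
        by (subst (asm) sums_Suc_iff) (simp add: f_def)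
      have sL: "(\<lambda>n. strength A i * (Vc A q n i * z^n) + f n) sums (((degmat A + z *\<^sub>R A) *v ?v) $ i)"
        unfolding L by (rule sums_add[OF s1 s3])
      have sR: "(\<lambda>k. \<Sum>m\<le>k. (cc A q m * z^m) * (Vc A q (k-m) i * z^(k-m))) sums (\<xi> z * ?v$i)"
      proof -
        have "(\<lambda>k. \<Sum>m\<le>k. (cc A q m * z^m) * (Vc A q (k-m) i * z^(k-m))) sums ((\<Sum>n. cc A q n * z^n) * (\<Sum>n. Vc A q n i * z^n))"
          by (rule Cauchy_product_sums[OF sc[OF z] sv[OF z]])
        then show ?thesis using sums_unique[OF sums_c[OF z]] sums_unique[OF sums_v[OF z]] by simp
      qed
      have "(\<lambda>n. strength A i * (Vc A q n i * z^n) + f n) = (\<lambda>k. \<Sum>m\<le>k. (cc A q m * z^m) * (Vc A q (k-m) i * z^(k-m)))"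
      proof
        fix n
        have "strength A i * (Vc A q n i * z^n) + f n
           = (strength A i * Vc A q n i + (if n = 0 then 0 else (\<Sum>j\<in>UNIV. A$i$j * Vc A q (n-1) j))) * z^n"
          by (simp add: f_def algebra_simps)
        also have "\<dots> = (\<Sum>m\<le>n. cc A q m * Vc A q (n - m) i) * z^n"
          using coeff_id[OF simple, of i n] by simp
        also have "\<dots> = (\<Sum>m\<le>n. (cc A q m * z^m) * (Vc A q (n-m) i * z^(n-m)))"
          unfolding sum_distrib_right
        proof (rule sum.cong[OF refl])
          fix m assume "m \<in> {..n}"
          then have "z^m * z^(n-m) = z^n" by (simp add: power_add[symmetric])
          then show "cc A q m * Vc A q (n - m) i * z ^ n = cc A q m * z ^ m * (Vc A q (n - m) i * z ^ (n - m))"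
            by (metis mult.assoc mult.left_commute)
        qed
        finally show "strength A i * (Vc A q n i * z^n) + f n = (\<Sum>m\<le>n. (cc A q m * z^m) * (Vc A q (n-m) i * z^(n-m)))" .
      qed
      then have "((degmat A + z *\<^sub>R A) *v ?v) $ i = \<xi> z * ?v$i"
        using sums_unique2[OF sL] sR by simp
      then show "((degmat A + z *\<^sub>R A) *v ?v) $ i = (\<xi> z *\<^sub>R ?v) $ i" by simp
    qed
    then show ?thesis unfolding is_eigenvalue_def using nz by blast
  qed
  have xi0: "\<xi> 0 = d q" unfolding \<xi>_def using powser_zero[of "cc A q"] by (simp add: cc_def dd)
  note cf = coeffs[OF sym diag0 simple, folded dd]
  have unw: "c 2 = (\<Sum>k\<in>{k. A $ q $ k = 1}. 1 / (d q - d k)) \<and>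
        c 3 = (\<Sum>r\<in>{r. A $ q $ r = 1}. \<Sum>k\<in>{k. A $ q $ k = 1 \<and> A $ r $ k = 1}.
                 1 / ((d q - d r) * (d q - d k)))"
    if c2: "c 2 = (\<Sum>k\<in>{k. k \<noteq> q}. (A $ k $ q)^2 / (d q - d k))"
    and c3: "c 3 = (\<Sum>r\<in>{r. r \<noteq> q}. A $ r $ q / (d q - d r) *
              (\<Sum>k\<in>{k. k \<noteq> q}. A $ k $ q * A $ k $ r / (d q - d k)))"
    and b: "\<forall>i j. A $ i $ j = 0 \<or> A $ i $ j = 1" for c :: "nat \<Rightarrow> real"
  proof
    have set1: "{k\<in>{k. k \<noteq> q}. A $ q $ k = 1} = {k. A $ q $ k = 1}" using diag0[of q] by auto
    show "c 2 = (\<Sum>k\<in>{k. A $ q $ k = 1}. 1 / (d q - d k))"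
      unfolding c2
      by (rule filter_sum[OF _ _ set1]) (use b sym in \<open>auto simp: power2_eq_square\<close>)
    have inner: "(\<Sum>k\<in>{k. k \<noteq> q}. A $ k $ q * A $ k $ r / (d q - d k)) = (\<Sum>k\<in>{k. A $ q $ k = 1 \<and> A $ r $ k = 1}. 1 / (d q - d k))" for r
      by (rule filter_sum[where P="\<lambda>k. A $ q $ k = 1 \<and> A $ r $ k = 1"]) (use b sym diag0[of q] in \<open>auto\<close>)
    show "c 3 = (\<Sum>r\<in>{r. A $ q $ r = 1}. \<Sum>k\<in>{k. A $ q $ k = 1 \<and> A $ r $ k = 1}.
                 1 / ((d q - d r) * (d q - d k)))"
      unfolding c3 inner
    proof (rule filter_sum[OF _ _ set1])
      fix r assume r: "r \<in> {k. k \<noteq> q}"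
      show "A $ r $ q / (d q - d r) * (\<Sum>k\<in>{k. A $ q $ k = 1 \<and> A $ r $ k = 1}. 1 / (d q - d k))
        = (if A $ q $ r = 1 then (\<Sum>k\<in>{k. A $ q $ k = 1 \<and> A $ r $ k = 1}. 1 / ((d q - d r) * (d q - d k))) else 0)"
      proof (cases "A$q$r = 1")
        case True then have "A$r$q = 1" using sym by metis
        then show ?thesis using True by (simp add: sum_distrib_left)
      next
        case False then have "A$r$q = 0" using b sym by metis
        then show ?thesis using False by simp
      qed
    qed simp
  qed
  have c0: "cc A q 0 = d q" by (simp add: cc_def dd)
  have unw': "(\<forall>i j. A $ i $ j = 0 \<or> A $ i $ j = 1) \<longrightarrow>
        cc A q 2 = (\<Sum>k\<in>{k. A $ q $ k = 1}. 1 / (d q - d k)) \<and>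
        cc A q 3 = (\<Sum>r\<in>{r. A $ q $ r = 1}. \<Sum>k\<in>{k. A $ q $ k = 1 \<and> A $ r $ k = 1}.
                 1 / ((d q - d r) * (d q - d k)))"
    using unw[of "cc A q", OF cf(2) cf(3)] by blast
  show ?thesis
    apply (rule exI[of _ \<epsilon>], rule conjI[OF epos])
    apply (rule exI[of _ \<xi>], rule exI[of _ "cc A q"])
    apply (intro conjI allI impI)
    using sums_c eig xi0 c0 cf unw' by blast+
qed

end
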